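(* For every $\mathcal{L}_{\text{Ł}}^{\Box}$-formula $\varphi$: $\varphi$ is $\mathsf{K(Ł)}$-valid if and only if $\varphi^{*}$ is $\mathsf{K(A^c)}$-valid, where $^{*}$ is the translation defined in the context.
   Context: Formulas are built over a countably infinite set $\mathrm{Var}$ of variables. $\mathcal{L}_{\text{Ł}}^{\Box}$ has a binary connective $\supset$ and unary connectives $\sim$ and $\Box$. A $\mathsf{K(Ł)}$-model $\langle W,R,V\rangle$ consists of a nonempty set $W$, $R\subseteq W\times W$, and $V\colon\mathrm{Var}\times W\to[0,1]$ extended by $V(\sim\varphi,x)=1-V(\varphi,x)$, $V(\varphi\supset\psi,x)=\min(1,1-V(\varphi,x)+V(\psi,x))$, $V(\Box\varphi,x)=\inf_{[0,1]}\{V(\varphi,y):Rxy\}$ (infimum taken in $[0,1]$, so the empty infimum is $1$). A formula is $\mathsf{K(Ł)}$-valid if $V(\varphi,x)=1$ for all models and all $x$. The language $\mathcal{L}_{A^c}^{\Box}$ has binary $\wedge,\vee,\&,\to$, constants $\overline{0}$ and $c$, and unary $\Box$; $\neg\varphi:=\varphi\to\overline{0}$. A $\mathsf{K(A^c)}$-model $\langle W,R,V,c^{\mathfrak{M}}\rangle$ consists of a nonempty $W$, $R\subseteq W\times W$, a real $c^{\mathfrak{M}}$, and $V\colon\mathrm{Var}\times W\to[-r,r]$ for some real $r\ge0$, extended by: $\wedge$ as $\min$, $\vee$ as $\max$, $\&$ as $+$, $V(\varphi\to\psi,x)=V(\psi,x)-V(\varphi,x)$, $V(\overline{0},x)=0$,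 $V(c,x)=c^{\mathfrak{M}}$, $V(\Box\varphi,x)=\inf_{\mathbb{R}}\{V(\varphi,y):Rxy\}$ with the empty infimum equal to $0$. A formula is $\mathsf{K(A^c)}$-valid if $V(\varphi,x)\ge 0$ for all such models and all $x$. Let $\bot:=c\wedge\neg c$. The translation $^{*}$ from $\mathcal{L}_{\text{Ł}}^{\Box}$-formulas to $\mathcal{L}_{A^c}^{\Box}$-formulas is: $p^{*}=(p\wedge\overline{0})\vee\bot$ for $p\in\mathrm{Var}$, $(\sim\varphi)^{*}=\varphi^{*}\to\bot$, $(\varphi\supset\psi)^{*}=(\varphi^{*}\to\psi^{*})\wedge\overline{0}$, $(\Box\varphi)^{*}=\Box\varphi^{*}$. *)

theory Defs
  imports Complex_Main
begin

type_synonym var = nat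

datatype fmL = LVar var | LNeg fmL | LImp fmL fmL | LBox fmL

datatype fmA = AVar var | AAnd fmA fmA | AOr fmA fmA | AConj fmA fmA | AImp fmA fmA
  | AZero | AC | ABox fmA

definition ANeg :: "fmA \<Rightarrow> fmA" where "ANeg \<phi> = AImp \<phi> AZero"

definition ABot :: fmA where "ABot = AAnd AC (ANeg AC)"

fun tr :: "fmL \<Rightarrow> fmA" where
  "tr (LVar p) = AOr (AAnd (AVar p) AZero) ABot"
| "tr (LNeg \<phi>) = AImp (tr \<phi>) ABot"
| "tr (LImp \<phi> \<psi>) = AAnd (AImp (tr \<phi>) (tr \<psi>)) AZero"
| "tr (LBox \<phi>) = ABox (tr \<phi>)"

text \<open>Infimum in [0,1] with empty infimum 1: Inf of (S \<union> {1}) for S \<subseteq> [0,1].\<close>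
fun evalL :: "'w set \<Rightarrow> ('w \<Rightarrow> 'w \<Rightarrow> bool) \<Rightarrow> (var \<Rightarrow> 'w \<Rightarrow> real) \<Rightarrow> fmL \<Rightarrow> 'w \<Rightarrow> real" where
  "evalL W R V (LVar p) x = V p x"
| "evalL W R V (LNeg \<phi>) x = 1 - evalL W R V \<phi> x"
| "evalL W R V (LImp \<phi> \<psi>) x = min 1 (1 - evalL W R V \<phi> x + evalL W R V \<psi> x)"
| "evalL W R V (LBox \<phi>) x = Inf (insert 1 {evalL W R V \<phi> y | y. y \<in> W \<and> R x y})"

definition modelL :: "'w set \<Rightarrow> ('w \<Rightarrow> 'w \<Rightarrow> bool) \<Rightarrow> (var \<Rightarrow> 'w \<Rightarrow> real) \<Rightarrow> bool" where
  "modelL W R V \<longleftrightarrow> W \<noteq> {} \<and> (\<forall>x y. R x y \<longrightarrow> x \<in> W \<and> y \<in> W)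
     \<and> (\<forall>p. \<forall>x\<in>W. 0 \<le> V p x \<and> V p x \<le> 1)"

definition validKL :: "'w itself \<Rightarrow> fmL \<Rightarrow> bool" where
  "validKL _ \<phi> \<longleftrightarrow> (\<forall>(W::'w set) R V. modelL W R V \<longrightarrow> (\<forall>x\<in>W. evalL W R V \<phi> x = 1))"

fun evalA :: "'w set \<Rightarrow> ('w \<Rightarrow> 'w \<Rightarrow> bool) \<Rightarrow> (var \<Rightarrow> 'w \<Rightarrow> real) \<Rightarrow> real \<Rightarrow> fmA \<Rightarrow> 'w \<Rightarrow> real" where
  "evalA W R V c (AVar p) x = V p x"
| "evalA W R V c (AAnd \<phi> \<psi>) x = min (evalA W R V c \<phi> x) (evalA W R V c \<psi> x)"
| "evalA W R V c (AOr \<phi> \<psi>) x = max (evalA W R V c \<phi> x) (evalA W R V c \<psi> x)"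
| "evalA W R V c (AConj \<phi> \<psi>) x = evalA W R V c \<phi> x + evalA W R V c \<psi> x"
| "evalA W R V c (AImp \<phi> \<psi>) x = evalA W R V c \<psi> x - evalA W R V c \<phi> x"
| "evalA W R V c AZero x = 0"
| "evalA W R V c AC x = c"
| "evalA W R V c (ABox \<phi>) x =
     (if {y \<in> W. R x y} = {} then 0 else Inf {evalA W R V c \<phi> y | y. y \<in> W \<and> R x y})"

definition modelA :: "'w set \<Rightarrow> ('w \<Rightarrow> 'w \<Rightarrow> bool) \<Rightarrow> (var \<Rightarrow> 'w \<Rightarrow> real) \<Rightarrow> bool" where
  "modelA W R V \<longleftrightarrow> W \<noteq> {} \<and> (\<forall>x y. R x y \<longrightarrow> x \<in> W \<and> y \<in> W)
     \<and> (\<exists>r::real. r \<ge> 0 \<and> (\<forall>p. \<forall>x\<in>W. -r \<le> V p x \<and> V p x \<le> r))"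

definition validKA :: "'w itself \<Rightarrow> fmA \<Rightarrow> bool" where
  "validKA _ \<phi> \<longleftrightarrow> (\<forall>(W::'w set) R V (c::real). modelA W R V \<longrightarrow> (\<forall>x\<in>W. evalA W R V c \<phi> x \<ge> 0))"

end

theory Submission
  imports Defs
begin

lemma inf_scale:
  fixes S :: "real set" and s :: real
  assumes "S \<noteq> {}" "bdd_below S" "s \<ge> 0"
  shows "Inf ((\<lambda>t. s*(t-1)) ` S) = s*(Inf S - 1)"
proof -
  have "mono (\<lambda>t::real. s*(t-1))" using assms(3) by (auto simp: mono_def intro: mult_left_mono)
  moreover have "continuous (at_right (Inf S)) (\<lambda>t::real. s*(t-1))"
    by (intro continuous_intros)
  ultimately show ?thesis using continuous_at_Inf_mono[OF _ _ assms(1,2)] by metis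
qed

lemma key:
  fixes W :: "'w set" and R V V' c
  defines "s \<equiv> \<bar>c\<bar>"
  assumes RW: "\<forall>x y. R x y \<longrightarrow> x \<in> W \<and> y \<in> W"
  and VV: "\<forall>p. \<forall>x\<in>W. V' p x = 1 + max (min (V p x) 0) (-s) / s"
  shows "x \<in> W \<Longrightarrow> evalA W R V c (tr \<phi>) x = s*(evalL W R V' \<phi> x - 1)
     \<and> 0 \<le> evalL W R V' \<phi> x \<and> evalL W R V' \<phi> x \<le> 1"
proof (induction \<phi> arbitrary: x)
  case (LVar p)
  have s0: "s \<ge> 0" unfolding s_def by simp
  have bot: "min c (0 - c) = - s" unfolding s_def by auto
  show ?case
  proof (cases "s = 0")
    case True
    then show ?thesis using LVar VV bot by (simp add: ABot_def ANeg_def)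
  next
    case False
    then have sp: "s > 0" using s0 by simp
    have e: "V' p x = 1 + max (min (V p x) 0) (-s) / s" using VV LVar by auto
    have a: "max (min (V p x) 0) (-s) / s \<le> 0" using sp by (simp add: divide_nonpos_pos)
    have b: "-1 \<le> max (min (V p x) 0) (-s) / s" using sp by (simp add: le_divide_eq)
    show ?thesis using e a b sp bot by (simp add: ABot_def ANeg_def)
  qed
next
  case (LNeg \<phi>)
  have bot: "min c (0 - c) = - s" unfolding s_def by auto
  show ?case using LNeg.IH[OF LNeg.prems] bot by (simp add: ABot_def ANeg_def algebra_simps)
next
  case (LImp \<phi> \<psi>)
  have s0: "s \<ge> 0" unfolding s_def by simp
  have A: "evalA W R V c (tr \<phi>) x = s*(evalL W R V' \<phi> x - 1)"
    "evalA W R V c (tr \<psi>) x = s*(evalL W R V' \<psi> x - 1)"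
    using LImp.IH LImp.prems by auto
  have "min (s*(evalL W R V' \<psi> x - 1) - s*(evalL W R V' \<phi> x - 1)) 0
       = s * (min 1 (1 - evalL W R V' \<phi> x + evalL W R V' \<psi> x) - 1)"
  proof -
    fix a b :: real
    have gen: "\<And>a b. min (s*(b - 1) - s*(a - 1)) 0 = s * (min 1 (1 - a + b) - 1)"
    proof -
      fix a b :: real
      have e1: "s*(b - 1) - s*(a - 1) = s*(b-a)" by (simp add: algebra_simps)
      show "min (s*(b - 1) - s*(a - 1)) 0 = s * (min 1 (1 - a + b) - 1)"
      proof (cases "b \<le> a")
        case True
        then have "s*(b-a) \<le> 0" using s0 by (simp add: mult_nonneg_nonpos)
        moreover have "min 1 (1 - a + b) = 1 - a + b" using True by simp
        ultimately show ?thesis using e1 by (simp add: algebra_simps)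
      next
        case False
        then have "s*(b-a) \<ge> 0" using s0 by simp
        moreover have "min 1 (1 - a + b) = 1" using False by simp
        ultimately show ?thesis using e1 by simp
      qed
    qed
    show ?thesis by (rule gen)
  qed
  then show ?case using A LImp.IH LImp.prems by auto
next
  case (LBox \<phi>)
  have s0: "s \<ge> 0" unfolding s_def by simp
  define S where "S = {evalL W R V' \<phi> y | y. y \<in> W \<and> R x y}"
  have SA: "{evalA W R V c (tr \<phi>) y | y. y \<in> W \<and> R x y} = (\<lambda>t. s*(t-1)) ` S"
  proof -
    have "{evalA W R V c (tr \<phi>) y | y. y \<in> W \<and> R x y} = {s*(evalL W R V' \<phi> y - 1) | y. y \<in> W \<and> R x y}"
      by (intro Collect_cong ex_cong1) (use LBox.IH in auto)
    also have "\<dots> = (\<lambda>t. s*(t-1)) ` S" unfolding S_def by auto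
    finally show ?thesis .
  qed
  have Sb: "\<forall>t\<in>S. 0 \<le> t \<and> t \<le> 1" unfolding S_def using LBox.IH by auto
  show ?case
  proof (cases "{y \<in> W. R x y} = {}")
    case True
    then have "S = {}" unfolding S_def by auto
    then have "{evalL W R V' \<phi> y | y. y \<in> W \<and> R x y} = {}" unfolding S_def .
    then have E: "evalL W R V' (LBox \<phi>) x = 1" by (simp only: evalL.simps) simp
    have F: "evalA W R V c (tr (LBox \<phi>)) x = 0" using True by simp
    show ?thesis using E F by simp
  next
    case False
    then have Sne: "S \<noteq> {}" unfolding S_def by auto
    have bb: "bdd_below S" using Sb by (auto intro: bdd_belowI)
    have i1: "Inf S \<le> 1" using Sne Sb bb by (meson cInf_lower equals0I order_trans)
    have i0: "0 \<le> Inf S" using Sne Sb by (meson cInf_greatest)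
    have ins: "Inf (insert 1 S) = Inf S" using cInf_insert[OF Sne bb] i1 by (simp add: inf_absorb2)
    have E: "evalL W R V' (LBox \<phi>) x = Inf S" using ins unfolding S_def by simp
    have F: "evalA W R V c (tr (LBox \<phi>)) x = Inf ((\<lambda>t. s*(t-1)) ` S)"
      using False SA by (simp only: tr.simps evalA.simps if_False)
    show ?thesis using E F i0 i1 inf_scale[OF Sne bb s0] by simp
  qed
qed

theorem proposition2p3:
  fixes \<phi> :: fmL
  shows "validKL TYPE('w) \<phi> \<longleftrightarrow> validKA TYPE('w) (tr \<phi>)"
proof
  assume L: "validKL TYPE('w) \<phi>"
  show "validKA TYPE('w) (tr \<phi>)" unfolding validKA_def
  proof (intro allI impI ballI)
    fix W :: "'w set" and R V c x assume M: "modelA W R V" and x: "x \<in> W"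
    define s :: real where "s = \<bar>c\<bar>"
    define V' where "V' = (\<lambda>p x. 1 + max (min (V p x) 0) (-s) / s)"
    have RW: "\<forall>x y. R x y \<longrightarrow> x \<in> W \<and> y \<in> W" using M unfolding modelA_def by (rule conjunct1[OF conjunct2])
    have K: "\<And>x. x \<in> W \<Longrightarrow> evalA W R V c (tr \<phi>) x = s*(evalL W R V' \<phi> x - 1)
     \<and> 0 \<le> evalL W R V' \<phi> x \<and> evalL W R V' \<phi> x \<le> 1"
    proof -
      fix x assume "x \<in> W"
      have VV: "\<forall>p. \<forall>x\<in>W. V' p x = 1 + max (min (V p x) 0) (-\<bar>c\<bar>) / \<bar>c\<bar>"
        unfolding V'_def s_def by simp
      show "evalA W R V c (tr \<phi>) x = s*(evalL W R V' \<phi> x - 1)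
     \<and> 0 \<le> evalL W R V' \<phi> x \<and> evalL W R V' \<phi> x \<le> 1"
        using key[OF RW VV \<open>x \<in> W\<close>] unfolding s_def .
    qed
    have HL: "modelL W R V'" unfolding modelL_def
    proof (intro conjI allI ballI)
      show "W \<noteq> {}" using M unfolding modelA_def by (rule conjunct1)
      show "\<And>x y. R x y \<longrightarrow> x \<in> W \<and> y \<in> W" using RW by blast
      fix p y assume "y \<in> W"
      have s0: "s \<ge> 0" unfolding s_def by simp
      show "0 \<le> V' p y" "V' p y \<le> 1"
      proof -
        have "-1 \<le> max (min (V p y) 0) (-s) / s \<and> max (min (V p y) 0) (-s) / s \<le> 0"
          using s0 by (cases "s = 0") (auto simp: le_divide_eq divide_nonpos_pos)
        then show "0 \<le> V' p y" "V' p y \<le> 1" unfolding V'_def by auto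
      qed
    qed
    have "evalL W R V' \<phi> x = 1" using L[unfolded validKL_def, rule_format, OF HL x] .
    then show "0 \<le> evalA W R V c (tr \<phi>) x" using K[OF x] by simp
  qed
next
  assume A: "validKA TYPE('w) (tr \<phi>)"
  show "validKL TYPE('w) \<phi>" unfolding validKL_def
  proof (intro allI impI ballI)
    fix W :: "'w set" and R V x assume M: "modelL W R V" and x: "x \<in> W"
    define V2 where "V2 = (\<lambda>p x. V p x - 1)"
    have RW: "\<forall>x y. R x y \<longrightarrow> x \<in> W \<and> y \<in> W" using M unfolding modelL_def by (rule conjunct1[OF conjunct2])
    have VB: "\<forall>p. \<forall>x\<in>W. 0 \<le> V p x \<and> V p x \<le> 1" using M unfolding modelL_def by (rule conjunct2[OF conjunct2])
    have MA: "modelA W R V2" unfolding modelA_def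
    proof (intro conjI exI[of _ 1] allI ballI)
      show "W \<noteq> {}" using M unfolding modelL_def by (rule conjunct1)
      show "\<And>x y. R x y \<longrightarrow> x \<in> W \<and> y \<in> W" using RW by blast
      show "(0::real) \<le> 1" by simp
      fix p y assume "y \<in> W"
      then have "0 \<le> V p y \<and> V p y \<le> 1" using VB by blast
      then show "- 1 \<le> V2 p y" "V2 p y \<le> 1" unfolding V2_def by auto
    qed
    have VV: "\<forall>p. \<forall>x\<in>W. V p x = 1 + max (min (V2 p x) 0) (-\<bar>1::real\<bar>) / \<bar>1\<bar>"
      using VB by (auto simp: V2_def)
    have K: "evalA W R V2 1 (tr \<phi>) x = \<bar>1\<bar>*(evalL W R V \<phi> x - 1)
     \<and> 0 \<le> evalL W R V \<phi> x \<and> evalL W R V \<phi> x \<le> 1"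
      using key[OF RW VV x] .
    have "0 \<le> evalA W R V2 1 (tr \<phi>) x" using A[unfolded validKA_def, rule_format, OF MA x] .
    then show "evalL W R V \<phi> x = 1" using K by simp
  qed
qed

end
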